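(* Let $k\in\,]0,2]$. Then the functional $$f\mapsto\Psi(f)=\int_{\mathbb R^3}\int_{\mathbb R^3}e^{\lambda_f}\chi(f)\,dx\,dv$$ is convex (on the convex set of measurable spherically symmetric $f\ge0$ with finite mass for which $2m_f(r)/r<1$ for all $r>0$).
   Context: $\chi(s)=\frac{k}{k+1}s^{1+1/k}$. A measurable $f\ge0$ on $\mathbb R^3\times\mathbb R^3$ is spherically symmetric if $f(Ax,Av)=f(x,v)$ for all $A\in SO(3)$. Its mass is $\int\int\sqrt{1+|v|^2}f\,dx\,dv$, its mass function $m_f(r)=\int_{|x|\le r}\int\sqrt{1+|v|^2}f\,dx\,dv$, and $\lambda_f$ is defined by $e^{-2\lambda_f(r)}=1-\frac{2m_f(r)}{r}$, evaluated at $r=|x|$. *)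

theory Defs
  imports "HOL-Analysis.Analysis"
begin

type_synonym phase_fn = "real^3 \<Rightarrow> real^3 \<Rightarrow> real"

definition chi :: "real \<Rightarrow> real \<Rightarrow> real" where
  "chi k s = k / (k + 1) * s powr (1 + 1 / k)"

definition SO3 :: "(real^3^3) set" where
  "SO3 = {A. orthogonal_matrix A \<and> det A = 1}"

definition spherically_symmetric :: "phase_fn \<Rightarrow> bool" where
  "spherically_symmetric f \<longleftrightarrow> (\<forall>A\<in>SO3. \<forall>x v. f (A *v x) (A *v v) = f x v)"

definition mass :: "phase_fn \<Rightarrow> ennreal" where
  "mass f = (\<integral>\<^sup>+ p. ennreal (sqrt (1 + (norm (snd p))\<^sup>2) * f (fst p) (snd p)) \<partial>lebesgue)"

definition mass_fun :: "phase_fn \<Rightarrow> real \<Rightarrow> real" where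
  "mass_fun f r = enn2real (\<integral>\<^sup>+ p. ennreal (sqrt (1 + (norm (snd p))\<^sup>2) * f (fst p) (snd p))
       * indicator {p. norm (fst p) \<le> r} p \<partial>lebesgue)"

definition lambda_f :: "phase_fn \<Rightarrow> real \<Rightarrow> real" where
  "lambda_f f r = - ln (1 - 2 * mass_fun f r / r) / 2"

definition admissible :: "phase_fn set" where
  "admissible = {f. (\<lambda>p. f (fst p) (snd p)) \<in> borel_measurable lebesgue
      \<and> (\<forall>x v. f x v \<ge> 0) \<and> spherically_symmetric f \<and> mass f < \<infinity>
      \<and> (\<forall>r>0. 2 * mass_fun f r / r < 1)}"

definition Psi :: "real \<Rightarrow> phase_fn \<Rightarrow> ennreal" where
  "Psi k f = (\<integral>\<^sup>+ p. ennreal (exp (lambda_f f (norm (fst p))) * chi k (f (fst p) (snd p))) \<partial>lebesgue)"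

end

theory Submission imports Defs begin

lemma amgm3:
  fixes x y c p :: real
  assumes x: "x \<ge> 0" and y: "y > 0" and c: "c \<ge> 0" and p: "p \<ge> 1 + c"
  shows "p * x \<le> x powr p * y powr (-c) + c * y + (p - 1 - c)"
proof (cases "x = 0")
  case True then show ?thesis using c p y by simp
next
  case False
  then have x: "x > 0" using x by simp
  define A where "A = x powr p * y powr (-c)"
  have A: "A > 0" using x y by (simp add: A_def)
  have lnA: "ln A = p * ln x - c * ln y" using x y by (simp add: A_def ln_mult ln_powr)
  have e1: "ln (A/x) \<le> A/x - 1" using A x by (intro ln_le_minus_one) simp
  have e2: "ln (y/x) \<le> y/x - 1" using y x by (intro ln_le_minus_one) simp
  have e3: "ln (1/x) \<le> 1/x - 1" using x by (intro ln_le_minus_one) simp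
  have "0 = ln (A/x) + c * ln (y/x) + (p - 1 - c) * ln (1/x)"
    using A x y lnA by (simp add: ln_div algebra_simps)
  also have "\<dots> \<le> (A/x - 1) + c * (y/x - 1) + (p - 1 - c) * (1/x - 1)"
    using e1 e2 e3 c p by (intro add_mono mult_left_mono) auto
  finally have "0 \<le> x * ((A/x - 1) + c * (y/x - 1) + (p - 1 - c) * (1/x - 1))"
    using x by simp
  also have "\<dots> = A + c * y + (p - 1 - c) - p * x" using x by (simp add: field_simps)
  finally show ?thesis unfolding A_def by simp
qed

lemma tangent:
  fixes s b s1 b1 c p :: real
  assumes s: "s > 0" and b: "b > 0" and s1: "s1 \<ge> 0" and b1: "b1 > 0" and c: "c \<ge> 0" and p: "p \<ge> 1 + c"
  shows "s powr p * b powr (-c) + p * (s powr p * b powr (-c)) * ((s1 - s) / s)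
          - c * (s powr p * b powr (-c)) * ((b1 - b) / b) \<le> s1 powr p * b1 powr (-c)"
proof -
  define K where "K = s powr p * b powr (-c)"
  have K: "K > 0" using s b by (simp add: K_def)
  have h: "p * (s1/s) \<le> (s1/s) powr p * (b1/b) powr (-c) + c * (b1/b) + (p - 1 - c)"
    using amgm3[of "s1/s" "b1/b" c p] s b s1 b1 c p by simp
  have eq: "K * ((s1/s) powr p * (b1/b) powr (-c)) = s1 powr p * b1 powr (-c)"
    using s b s1 b1 unfolding K_def
    by (simp add: powr_divide powr_minus divide_simps)
  have "K * (1 + p * ((s1 - s)/s) - c * ((b1 - b)/b)) \<le> K * ((s1/s) powr p * (b1/b) powr (-c))"
  proof (rule mult_left_mono)
    show "1 + p * ((s1 - s)/s) - c * ((b1 - b)/b) \<le> (s1/s) powr p * (b1/b) powr (-c)"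
      using h s b by (simp add: diff_divide_distrib algebra_simps)
  qed (use K in simp)
  then show ?thesis using eq unfolding K_def[symmetric] by (simp add: algebra_simps)
qed

lemma jconv:
  fixes u1 u2 w1 w2 t c p :: real
  assumes t: "0 \<le> t" "t \<le> 1" and s: "u1 \<ge> 0" "u2 \<ge> 0" and b: "w1 > 0" "w2 > 0"
    and c: "c \<ge> 0" and p: "p \<ge> 1 + c"
  shows "(t*u1 + (1-t)*u2) powr p * (t*w1 + (1-t)*w2) powr (-c)
     \<le> t * (u1 powr p * w1 powr (-c)) + (1-t) * (u2 powr p * w2 powr (-c))"
proof -
  define s where "s = t*u1 + (1-t)*u2"
  define b where "b = t*w1 + (1-t)*w2"
  have s0: "s \<ge> 0" using t s unfolding s_def by simp
  have bpos: "b > 0" unfolding b_def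
  proof (cases "t = 0")
    case False then have "t * w1 > 0" using t b by simp
    moreover have "(1-t)*w2 \<ge> 0" using t b by simp
    ultimately show "t*w1 + (1-t)*w2 > 0" by linarith
  qed (use b in simp)
  show ?thesis
  proof (cases "s = 0")
    case True
    then show ?thesis using t s b unfolding s_def[symmetric] b_def[symmetric] by simp
  next
    case False
    then have sp: "s > 0" using s0 by simp
    define K where "K = s powr p * b powr (-c)"
    note T1 = tangent[OF sp bpos s(1) b(1) c p, folded K_def]
    note T2 = tangent[OF sp bpos s(2) b(2) c p, folded K_def]
    have lin1: "t * ((u1 - s)/s) + (1-t) * ((u2 - s)/s) = 0"
      using sp unfolding s_def by (simp add: field_simps)
    have lin2: "t * ((w1 - b)/b) + (1-t) * ((w2 - b)/b) = 0"
      using bpos unfolding b_def by (simp add: field_simps)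
    have "t * (K + p * K * ((u1 - s) / s) - c * K * ((w1 - b) / b))
        + (1-t) * (K + p * K * ((u2 - s) / s) - c * K * ((w2 - b) / b))
        \<le> t * (u1 powr p * w1 powr (-c)) + (1-t) * (u2 powr p * w2 powr (-c))"
      using T1 T2 t by (intro add_mono mult_left_mono) auto
    moreover have "t * (K + p * K * ((u1 - s) / s) - c * K * ((w1 - b) / b))
        + (1-t) * (K + p * K * ((u2 - s) / s) - c * K * ((w2 - b) / b))
        = K + p * K * (t * ((u1 - s)/s) + (1-t) * ((u2 - s)/s))
            - c * K * (t * ((w1 - b)/b) + (1-t) * ((w2 - b)/b))"
      by (simp add: algebra_simps)
    ultimately show ?thesis using lin1 lin2 unfolding K_def s_def b_def by simp
  qed
qed

lemma borel_leb: "g \<in> borel_measurable borel \<Longrightarrow> g \<in> borel_measurable lebesgue"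
  by (rule measurable_completion) simp

lemma meas_w: "(\<lambda>p::(real^3) \<times> (real^3). sqrt (1 + (norm (snd p))\<^sup>2)) \<in> borel_measurable lebesgue"
  by (intro borel_leb borel_measurable_continuous_onI continuous_intros)

lemma meas_n: "(\<lambda>p::(real^3) \<times> (real^3). norm (fst p)) \<in> borel_measurable lebesgue"
  by (intro borel_leb borel_measurable_continuous_onI continuous_intros)

lemma meas_set: "{p::(real^3) \<times> (real^3). norm (fst p) \<le> r} \<in> sets lebesgue"
proof -
  have "closed {p::(real^3) \<times> (real^3). norm (fst p) \<le> r}"
    by (intro closed_Collect_le continuous_intros)
  then have "{p::(real^3) \<times> (real^3). norm (fst p) \<le> r} \<in> sets borel" by simp
  then show ?thesis by (simp)
qed

lemma meas_mf:
  assumes "(\<lambda>p. f (fst p) (snd p)) \<in> borel_measurable lebesgue"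
  shows "(\<lambda>p::(real^3) \<times> (real^3). ennreal (sqrt (1 + (norm (snd p))\<^sup>2) * f (fst p) (snd p))
       * indicator {p. norm (fst p) \<le> r} p) \<in> borel_measurable lebesgue"
  using assms meas_set meas_w by measurable

lemma meas_m:
  assumes "(\<lambda>p. f (fst p) (snd p)) \<in> borel_measurable lebesgue"
  shows "(\<lambda>p::(real^3) \<times> (real^3). ennreal (sqrt (1 + (norm (snd p))\<^sup>2) * f (fst p) (snd p))) \<in> borel_measurable lebesgue"
  using assms meas_w by measurable

lemma meas_chi:
  assumes "(\<lambda>p. f (fst p) (snd p)) \<in> borel_measurable lebesgue" "L \<in> borel_measurable borel"
  shows "(\<lambda>p::(real^3) \<times> (real^3). ennreal (exp (L (norm (fst p))) * chi k (f (fst p) (snd p)))) \<in> borel_measurable lebesgue"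
proof -
  have "(\<lambda>p::(real^3) \<times> (real^3). L (norm (fst p))) \<in> borel_measurable lebesgue"
    using measurable_compose[OF meas_n assms(2)] by simp
  then show ?thesis using assms(1) unfolding chi_def by measurable
qed

lemma lin_integral:
  fixes f g :: phase_fn and W :: "(real^3) \<times> (real^3) \<Rightarrow> ennreal"
  assumes f: "f \<in> admissible" and g: "g \<in> admissible" and t: "0 \<le> t" "t \<le> 1"
    and W: "W \<in> borel_measurable lebesgue"
  shows "(\<integral>\<^sup>+ p. ennreal (sqrt (1 + (norm (snd p))\<^sup>2) * (t * f (fst p) (snd p) + (1-t) * g (fst p) (snd p))) * W p \<partial>lebesgue)
    = ennreal t * (\<integral>\<^sup>+ p. ennreal (sqrt (1 + (norm (snd p))\<^sup>2) * f (fst p) (snd p)) * W p \<partial>lebesgue)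
      + ennreal (1-t) * (\<integral>\<^sup>+ p. ennreal (sqrt (1 + (norm (snd p))\<^sup>2) * g (fst p) (snd p)) * W p \<partial>lebesgue)"
proof -
  have fm: "(\<lambda>p. f (fst p) (snd p)) \<in> borel_measurable lebesgue" and f0: "\<And>x v. f x v \<ge> 0"
    using f by (auto simp: admissible_def)
  have gm: "(\<lambda>p. g (fst p) (snd p)) \<in> borel_measurable lebesgue" and g0: "\<And>x v. g x v \<ge> 0"
    using g by (auto simp: admissible_def)
  have pw: "ennreal (sqrt (1 + (norm (snd p))\<^sup>2) * (t * f (fst p) (snd p) + (1-t) * g (fst p) (snd p))) * W p
     = ennreal t * (ennreal (sqrt (1 + (norm (snd p))\<^sup>2) * f (fst p) (snd p)) * W p)
       + ennreal (1-t) * (ennreal (sqrt (1 + (norm (snd p))\<^sup>2) * g (fst p) (snd p)) * W p)" for p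
  proof -
    let ?w = "sqrt (1 + (norm (snd p))\<^sup>2)"
    have w0: "?w \<ge> 0" by simp
    have "?w * (t * f (fst p) (snd p) + (1-t) * g (fst p) (snd p))
        = t * (?w * f (fst p) (snd p)) + (1-t) * (?w * g (fst p) (snd p))" by (simp add: algebra_simps)
    then have "ennreal (?w * (t * f (fst p) (snd p) + (1-t) * g (fst p) (snd p)))
        = ennreal t * ennreal (?w * f (fst p) (snd p)) + ennreal (1-t) * ennreal (?w * g (fst p) (snd p))"
      using t w0 f0 g0 by (simp add: ennreal_plus ennreal_mult)
    then show ?thesis by (simp add: distrib_right mult.assoc)
  qed
  show ?thesis
    unfolding pw
    using fm gm W meas_w
    by (subst nn_integral_add; (subst nn_integral_cmult)?; (subst nn_integral_cmult)?; measurable?)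
qed

abbreviation "comb t f g \<equiv> (\<lambda>x v. t * f x v + (1 - t) * g x v)"

lemma mass_lin:
  assumes f: "f \<in> admissible" and g: "g \<in> admissible" and t: "0 \<le> t" "t \<le> 1"
  shows "mass (comb t f g) = ennreal t * mass f + ennreal (1-t) * mass g"
  using lin_integral[OF f g t, of "\<lambda>_. 1"] unfolding mass_def by simp

lemma mf_le_mass:
  "(\<integral>\<^sup>+ p. ennreal (sqrt (1 + (norm (snd p))\<^sup>2) * f (fst p) (snd p))
       * indicator {p. norm (fst p) \<le> r} p \<partial>lebesgue) \<le> mass f"
  unfolding mass_def by (intro nn_integral_mono) (auto simp: indicator_def)

lemma mf_fin:
  assumes "f \<in> admissible"
  shows "(\<integral>\<^sup>+ p. ennreal (sqrt (1 + (norm (snd p))\<^sup>2) * f (fst p) (snd p))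
       * indicator {p. norm (fst p) \<le> r} p \<partial>lebesgue) < \<infinity>"
  using mf_le_mass[of f r] assms by (auto simp: admissible_def)

lemma mass_fun_lin:
  assumes f: "f \<in> admissible" and g: "g \<in> admissible" and t: "0 \<le> t" "t \<le> 1"
  shows "mass_fun (comb t f g) r = t * mass_fun f r + (1-t) * mass_fun g r"
proof -
  have "mass_fun (comb t f g) r = enn2real (ennreal t *
      (\<integral>\<^sup>+ p. ennreal (sqrt (1 + (norm (snd p))\<^sup>2) * f (fst p) (snd p)) * indicator {p. norm (fst p) \<le> r} p \<partial>lebesgue)
      + ennreal (1-t) * (\<integral>\<^sup>+ p. ennreal (sqrt (1 + (norm (snd p))\<^sup>2) * g (fst p) (snd p)) * indicator {p. norm (fst p) \<le> r} p \<partial>lebesgue))"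
    unfolding mass_fun_def
    by (subst lin_integral[OF f g t]) (use meas_set in auto)
  also have "\<dots> = t * mass_fun f r + (1-t) * mass_fun g r"
    unfolding mass_fun_def using mf_fin[OF f, of r] mf_fin[OF g, of r] t
    by (simp add: enn2real_plus enn2real_mult ennreal_mult_less_top)
  finally show ?thesis .
qed

lemma mass_fun_mono:
  assumes f: "f \<in> admissible"
  shows "mono (mass_fun f)"
proof
  fix r s :: real assume "r \<le> s"
  show "mass_fun f r \<le> mass_fun f s"
    unfolding mass_fun_def
    apply (rule enn2real_mono)
     apply (use \<open>r \<le> s\<close> in \<open>intro nn_integral_mono mult_left_mono, auto simp: indicator_def\<close>)[1]
    using mf_fin[OF f, of s] by simp
qed

lemma lambda_meas:
  assumes f: "f \<in> admissible"
  shows "lambda_f f \<in> borel_measurable borel"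
proof -
  have "mass_fun f \<in> borel_measurable borel" by (rule borel_measurable_mono[OF mass_fun_mono[OF f]])
  then show ?thesis unfolding lambda_f_def[abs_def] by measurable
qed

lemma b_pos:
  assumes f: "f \<in> admissible" and r: "r \<ge> 0"
  shows "1 - 2 * mass_fun f r / r > 0"
proof (cases "r = 0")
  case False
  then have "r > 0" using r by simp
  then have "2 * mass_fun f r / r < 1" using f unfolding admissible_def by blast
  then show ?thesis by linarith
qed simp

lemma exp_lambda:
  assumes f: "f \<in> admissible" and r: "r \<ge> 0"
  shows "exp (lambda_f f r) = (1 - 2 * mass_fun f r / r) powr (-(1/2))"
proof -
  have b: "1 - 2 * mass_fun f r / r \<noteq> 0" using b_pos[OF f r] by linarith
  show ?thesis unfolding lambda_f_def powr_def by (subst if_not_P[OF b]) simp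
qed

lemma comb_adm:
  assumes f: "f \<in> admissible" and g: "g \<in> admissible" and t: "0 \<le> t" "t \<le> 1"
  shows "comb t f g \<in> admissible"
proof -
  have fm: "(\<lambda>p. f (fst p) (snd p)) \<in> borel_measurable lebesgue" and f0: "\<And>x v. f x v \<ge> 0"
    and fs: "spherically_symmetric f" and fM: "mass f < \<infinity>" and fr: "\<forall>r>0. 2 * mass_fun f r / r < 1"
    using f by (auto simp: admissible_def)
  have gm: "(\<lambda>p. g (fst p) (snd p)) \<in> borel_measurable lebesgue" and g0: "\<And>x v. g x v \<ge> 0"
    and gs: "spherically_symmetric g" and gM: "mass g < \<infinity>" and gr: "\<forall>r>0. 2 * mass_fun g r / r < 1"
    using g by (auto simp: admissible_def)
  have 1: "(\<lambda>p. comb t f g (fst p) (snd p)) \<in> borel_measurable lebesgue"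
    using fm gm by measurable
  have 2: "\<forall>x v. comb t f g x v \<ge> 0" using f0 g0 t by simp
  have 3: "spherically_symmetric (comb t f g)" using fs gs by (simp add: spherically_symmetric_def)
  have 4: "mass (comb t f g) < \<infinity>" using mass_lin[OF f g t] fM gM
    by (simp add: ennreal_mult_less_top)
  have 5: "\<forall>r>0. 2 * mass_fun (comb t f g) r / r < 1"
  proof (intro allI impI)
    fix r :: real assume r: "r > 0"
    have a: "2 * mass_fun f r < r" and b: "2 * mass_fun g r < r" using fr gr r by (auto simp: divide_less_eq)
    have "2 * (t * mass_fun f r + (1-t) * mass_fun g r) < r"
    proof (cases "t = 0")
      case True then show ?thesis using b by simp
    next
      case False
      then have "t * (2 * mass_fun f r) < t * r" using a t by simp
      moreover have "(1-t) * (2 * mass_fun g r) \<le> (1-t) * r" using b t by (intro mult_left_mono) auto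
      ultimately show ?thesis by (simp add: algebra_simps)
    qed
    then show "2 * mass_fun (comb t f g) r / r < 1"
      using r by (simp add: mass_fun_lin[OF f g t] divide_less_eq)
  qed
  show ?thesis using 1 2 3 4 5 unfolding admissible_def by blast
qed

lemma aux: "(a::real) * (t * (X * B1) + (1-t) * (Y * B2)) = t * (B1 * (a * X)) + (1-t) * (B2 * (a * Y))"
  by (simp add: algebra_simps)

lemma pointwise:
  assumes f: "f \<in> admissible" and g: "g \<in> admissible" and t: "0 \<le> t" "t \<le> 1"
    and k: "0 < k" "k \<le> 2"
  shows "exp (lambda_f (comb t f g) (norm x)) * chi k (comb t f g x v)
    \<le> t * (exp (lambda_f f (norm x)) * chi k (f x v)) + (1-t) * (exp (lambda_f g (norm x)) * chi k (g x v))"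
proof -
  define r where "r = norm x"
  have r: "r \<ge> 0" unfolding r_def by simp
  define b1 where "b1 = 1 - 2 * mass_fun f r / r"
  define b2 where "b2 = 1 - 2 * mass_fun g r / r"
  have f0: "f x v \<ge> 0" using f by (auto simp: admissible_def)
  have g0: "g x v \<ge> 0" using g by (auto simp: admissible_def)
  have bh: "1 - 2 * mass_fun (comb t f g) r / r = t * b1 + (1-t) * b2"
    unfolding mass_fun_lin[OF f g t] b1_def b2_def by (simp add: divide_inverse algebra_simps)
  have p: "1 + 1/k \<ge> 1 + 1/2" using k by (simp add: divide_simps)
  note J = jconv[OF t f0 g0 b_pos[OF f r, folded b1_def] b_pos[OF g r, folded b2_def], of "1/2" "1 + 1/k"]
  have "exp (lambda_f (comb t f g) r) * chi k (comb t f g x v)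
     = k/(k+1) * ((t * f x v + (1-t) * g x v) powr (1 + 1/k) * (t * b1 + (1-t) * b2) powr (-(1/2)))"
    unfolding exp_lambda[OF comb_adm[OF f g t] r] bh chi_def by simp
  also have "\<dots> \<le> k/(k+1) * (t * (f x v powr (1 + 1/k) * b1 powr (-(1/2))) + (1-t) * (g x v powr (1 + 1/k) * b2 powr (-(1/2))))"
    using J p k by (intro mult_left_mono) auto
  also have "\<dots> = t * (exp (lambda_f f r) * chi k (f x v)) + (1-t) * (exp (lambda_f g r) * chi k (g x v))"
    unfolding exp_lambda[OF f r, folded b1_def] exp_lambda[OF g r, folded b2_def] chi_def
    by (rule aux)
  finally show ?thesis unfolding r_def .
qed

theorem lemma9p1:
  fixes k :: real
  assumes "0 < k" and "k \<le> 2"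
  shows "\<forall>f\<in>admissible. \<forall>g\<in>admissible. \<forall>t::real. 0 \<le> t \<and> t \<le> 1 \<longrightarrow>
           (\<lambda>x v. t * f x v + (1 - t) * g x v) \<in> admissible \<and>
           Psi k (\<lambda>x v. t * f x v + (1 - t) * g x v)
             \<le> ennreal t * Psi k f + ennreal (1 - t) * Psi k g"
proof (intro ballI allI impI conjI)
  fix f g and t :: real
  assume f: "f \<in> admissible" and g: "g \<in> admissible" and tt: "0 \<le> t \<and> t \<le> 1"
  then have t: "0 \<le> t" "t \<le> 1" by auto
  show "comb t f g \<in> admissible" by (rule comb_adm[OF f g t])
  have fm: "(\<lambda>p. f (fst p) (snd p)) \<in> borel_measurable lebesgue" and f0: "\<And>x v. f x v \<ge> 0"
    using f by (auto simp: admissible_def)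
  have gm: "(\<lambda>p. g (fst p) (snd p)) \<in> borel_measurable lebesgue" and g0: "\<And>x v. g x v \<ge> 0"
    using g by (auto simp: admissible_def)
  have c0: "chi k s \<ge> 0" if "s \<ge> 0" for s using assms unfolding chi_def by simp
  let ?F = "\<lambda>p::(real^3) \<times> (real^3). ennreal (exp (lambda_f f (norm (fst p))) * chi k (f (fst p) (snd p)))"
  let ?G = "\<lambda>p::(real^3) \<times> (real^3). ennreal (exp (lambda_f g (norm (fst p))) * chi k (g (fst p) (snd p)))"
  have Fm: "?F \<in> borel_measurable lebesgue" by (rule meas_chi[OF fm lambda_meas[OF f]])
  have Gm: "?G \<in> borel_measurable lebesgue" by (rule meas_chi[OF gm lambda_meas[OF g]])
  have "Psi k (comb t f g) \<le> (\<integral>\<^sup>+ p. ennreal t * ?F p + ennreal (1-t) * ?G p \<partial>lebesgue)"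
    unfolding Psi_def
  proof (intro nn_integral_mono)
    fix p :: "(real^3) \<times> (real^3)"
    have "ennreal (exp (lambda_f (comb t f g) (norm (fst p))) * chi k (comb t f g (fst p) (snd p)))
      \<le> ennreal (t * (exp (lambda_f f (norm (fst p))) * chi k (f (fst p) (snd p)))
         + (1-t) * (exp (lambda_f g (norm (fst p))) * chi k (g (fst p) (snd p))))"
      by (intro ennreal_leI pointwise[OF f g t assms])
    also have "\<dots> = ennreal t * ?F p + ennreal (1-t) * ?G p"
      using t c0 f0 g0 by (simp add: ennreal_plus ennreal_mult)
    finally show "ennreal (exp (lambda_f (comb t f g) (norm (fst p))) * chi k (comb t f g (fst p) (snd p)))
      \<le> ennreal t * ?F p + ennreal (1-t) * ?G p" .
  qed
  also have "\<dots> = ennreal t * Psi k f + ennreal (1-t) * Psi k g"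
    unfolding Psi_def using Fm Gm
    by (subst nn_integral_add; (subst nn_integral_cmult)?; (subst nn_integral_cmult)?; measurable?)
  finally show "Psi k (comb t f g) \<le> ennreal t * Psi k f + ennreal (1-t) * Psi k g" .
qed

end
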